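(* Let $K$ be a simplex in a topological vector space $F$ and let $T:K\to 2^{K}$ be a correspondence with *-weakly convex graph. Then there exists $x^*\in K$ such that $x^*\in\overline{T}(x^* )$.
   Context: A simplex is the convex hull of a finite affinely independent set. For $T:X\to 2^Y$: $\mathrm{Gr}(T)=\{(x,y)\in X\times Y:y\in T(x)\}$; $\overline{T}(x)=\{y\in Y:(x,y)\in\mathrm{cl}_{X\times Y}\mathrm{Gr}(T)\}$; for $V\subset F$, $T_V(x)=(T(x)+V)\cap Y$. Weakly convex graph: $T:X\to 2^Y$ ($X,Y$ nonempty convex) has weakly convex graph if for each finite set $\{x_1,\dots,x_n\}\subset X$ there exist $y_i\in T(x_i)$ such that $\mathrm{co}\{(x_1,y_1),\dots,(x_n,y_n)\}\subset\mathrm{Gr}(T)$, equivalently $\sum_i\lambda_iy_i\in T(\sum_i\lambda_ix_i)$ for all $(\lambda_1,\dots,\lambda_n)$ with $\lambda_i\ge0$, $\sum_i\lambda_i=1$. *-weakly convex graph: $T:X\to 2^Y$, with $Y\subset F$, has *-weakly convex graph if for each neighborhood $V$ of the origin in $F$ the correspondence $T_V$ has weakly convex graph. *)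

theory Defs
  imports "HOL-Analysis.Analysis"
begin

definition tvs_type :: "'a::{real_vector,topological_space} itself \<Rightarrow> bool" where
  "tvs_type _ \<longleftrightarrow>
     continuous_on UNIV (\<lambda>p::'a \<times> 'a. fst p + snd p) \<and>
     continuous_on UNIV (\<lambda>p::real \<times> 'a. fst p *\<^sub>R snd p)"

definition is_simplex :: "'a::real_vector set \<Rightarrow> bool" where
  "is_simplex K \<longleftrightarrow> (\<exists>S. finite S \<and> S \<noteq> {} \<and> \<not> affine_dependent S \<and> K = convex hull S)"

definition Gr :: "'a set \<Rightarrow> ('a \<Rightarrow> 'b set) \<Rightarrow> ('a \<times> 'b) set" where
  "Gr X T = {(x, y). x \<in> X \<and> y \<in> T x}"

definition cl_corr :: "'a::topological_space set \<Rightarrow> 'b::topological_space set \<Rightarrow>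
    ('a \<Rightarrow> 'b set) \<Rightarrow> 'a \<Rightarrow> 'b set" where
  "cl_corr X Y T x = {y \<in> Y. (x, y) \<in> closure (Gr X T) \<inter> (X \<times> Y)}"

definition corr_V :: "'b::real_vector set \<Rightarrow> ('a \<Rightarrow> 'b set) \<Rightarrow> 'b set \<Rightarrow> 'a \<Rightarrow> 'b set" where
  "corr_V Y T V x = {y + v | y v. y \<in> T x \<and> v \<in> V} \<inter> Y"

definition weakly_convex_graph :: "'a::real_vector set \<Rightarrow> 'b::real_vector set \<Rightarrow>
    ('a \<Rightarrow> 'b set) \<Rightarrow> bool" where
  "weakly_convex_graph X Y T \<longleftrightarrow>
     (\<forall>A. finite A \<and> A \<subseteq> X \<longrightarrow>
        (\<exists>y. (\<forall>x\<in>A. y x \<in> T x) \<and> convex hull ((\<lambda>x. (x, y x)) ` A) \<subseteq> Gr X T))"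

definition star_weakly_convex_graph :: "'a::real_vector set \<Rightarrow>
    'b::{real_vector,topological_space} set \<Rightarrow> ('a \<Rightarrow> 'b set) \<Rightarrow> bool" where
  "star_weakly_convex_graph X Y T \<longleftrightarrow>
     (\<forall>V. (\<exists>U. open U \<and> 0 \<in> U \<and> U \<subseteq> V) \<longrightarrow> weakly_convex_graph X Y (corr_V Y T V))"

end

theory Submission imports Defs begin

lemma tvs_add:
  fixes f g :: "'b::topological_space \<Rightarrow> 'a::{real_vector,topological_space}"
  assumes "tvs_type TYPE('a)" "continuous_on X f" "continuous_on X g"
  shows "continuous_on X (\<lambda>x. f x + g x)"
proof -
  have "continuous_on UNIV (\<lambda>p::'a \<times> 'a. fst p + snd p)" using assms(1) unfolding tvs_type_def by blast
  from continuous_on_compose2[OF this continuous_on_Pair[OF assms(2,3)]] show ?thesis by simp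
qed

lemma tvs_scale:
  fixes f :: "'b::topological_space \<Rightarrow> real" and g :: "'b \<Rightarrow> 'a::{real_vector,topological_space}"
  assumes "tvs_type TYPE('a)" "continuous_on X f" "continuous_on X g"
  shows "continuous_on X (\<lambda>x. f x *\<^sub>R g x)"
proof -
  have "continuous_on UNIV (\<lambda>p::real \<times> 'a. fst p *\<^sub>R snd p)" using assms(1) unfolding tvs_type_def by blast
  from continuous_on_compose2[OF this continuous_on_Pair[OF assms(2,3)]] show ?thesis by simp
qed

lemma tvs_sum:
  fixes f :: "'c \<Rightarrow> 'b::topological_space \<Rightarrow> 'a::{real_vector,topological_space}"
  assumes "tvs_type TYPE('a)" "finite I" "\<And>i. i \<in> I \<Longrightarrow> continuous_on X (f i)"
  shows "continuous_on X (\<lambda>x. \<Sum>i\<in>I. f i x)"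
  using assms(2,3)
proof (induction I rule: finite_induct)
  case empty then show ?case by (simp add: continuous_on_const)
next
  case (insert a F)
  then show ?case by (simp add: tvs_add[OF assms(1)])
qed

lemma stationary:
  fixes P :: "'b \<Rightarrow> 'b \<Rightarrow> real"
  assumes "finite S" "S \<noteq> {}" "\<forall>i\<in>S. \<forall>j\<in>S. 0 \<le> P i j" "\<forall>i\<in>S. (\<Sum>j\<in>S. P i j) = 1"
  shows "\<exists>\<pi>. (\<forall>i\<in>S. 0 \<le> \<pi> i) \<and> (\<Sum>i\<in>S. \<pi> i) = 1 \<and> (\<forall>j\<in>S. (\<Sum>i\<in>S. \<pi> i * P i j) = \<pi> j)"
  using assms
proof (induction S arbitrary: P rule: finite_ne_induct)
  case (singleton n)
  then show ?case by (intro exI[of _ "\<lambda>_. 1"]) auto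
next
  case (insert n F)
  have rowsum: "P n n + (\<Sum>j\<in>F. P n j) = 1" using insert by (simp add: sum.insert)
  have nnF: "(\<Sum>j\<in>F. P n j) \<ge> 0" using insert by (intro sum_nonneg) auto
  show ?case
  proof (cases "P n n = 1")
    case True
    then have "(\<Sum>j\<in>F. P n j) = 0" using rowsum by simp
    then have z: "\<forall>j\<in>F. P n j = 0" using insert sum_nonneg_eq_0_iff[of F "P n"] by auto
    show ?thesis
    proof (intro exI[of _ "\<lambda>i. if i = n then 1 else 0"] conjI ballI)
      fix j assume j: "j \<in> insert n F"
      have "(\<Sum>i\<in>insert n F. (if i = n then 1 else 0) * P i j) = P n j"
        using insert by (simp add: sum.insert) (auto intro!: sum.neutral split: if_splits)
      also have "\<dots> = (if j = n then 1 else 0)" using True z j insert by auto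
      finally show "(\<Sum>i\<in>insert n F. (if i = n then 1 else 0) * P i j) = (if j = n then 1 else (0::real))" .
    qed (use insert in auto)
  next
    case False
    define d where "d = 1 - P n n"
    have dpos: "d > 0" using False rowsum nnF d_def by linarith
    have sF: "(\<Sum>j\<in>F. P n j) = d" using rowsum d_def by simp
    define P' where "P' i j = P i j + P i n * P n j / d" for i j
    have "\<forall>i\<in>F. \<forall>j\<in>F. 0 \<le> P' i j" using insert dpos unfolding P'_def by auto
    moreover have "\<forall>i\<in>F. (\<Sum>j\<in>F. P' i j) = 1"
    proof
      fix i assume i: "i \<in> F"
      have r: "P i n + (\<Sum>j\<in>F. P i j) = 1" using insert i by (simp add: sum.insert)
      have "(\<Sum>j\<in>F. P' i j) = (\<Sum>j\<in>F. P i j) + P i n * (\<Sum>j\<in>F. P n j) / d"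
        unfolding P'_def by (simp add: sum.distrib sum_distrib_left sum_divide_distrib)
      also have "\<dots> = 1" using sF dpos r by simp
      finally show "(\<Sum>j\<in>F. P' i j) = 1" .
    qed
    ultimately obtain \<sigma> where s1: "\<forall>i\<in>F. 0 \<le> \<sigma> i" and s2: "(\<Sum>i\<in>F. \<sigma> i) = 1"
      and s3: "\<forall>j\<in>F. (\<Sum>i\<in>F. \<sigma> i * P' i j) = \<sigma> j"
      using insert.IH[of P'] by blast
    define c where "c = (\<Sum>i\<in>F. \<sigma> i * P i n) / d"
    have c0: "c \<ge> 0" unfolding c_def using dpos s1 insert by (intro divide_nonneg_pos sum_nonneg) auto
    define \<rho> where "\<rho> i = (if i = n then c else \<sigma> i)" for i
    have rsum: "(\<Sum>i\<in>insert n F. \<rho> i) = 1 + c"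
      using insert s2 unfolding \<rho>_def by (simp add: sum.insert) (smt (verit) sum.cong)
    have rstat: "(\<Sum>i\<in>insert n F. \<rho> i * P i j) = \<rho> j" if j: "j \<in> insert n F" for j
    proof -
      have e: "(\<Sum>i\<in>insert n F. \<rho> i * P i j) = c * P n j + (\<Sum>i\<in>F. \<sigma> i * P i j)"
        using insert unfolding \<rho>_def by (simp add: sum.insert) (smt (verit) sum.cong)
      show ?thesis
      proof (cases "j = n")
        case True
        have "(\<Sum>i\<in>F. \<sigma> i * P i n) = c * d" using c_def dpos by simp
        then show ?thesis using e True d_def unfolding \<rho>_def by (simp add: algebra_simps)
      next
        case False
        then have jF: "j \<in> F" using j by auto
        have "\<sigma> j = (\<Sum>i\<in>F. \<sigma> i * P' i j)" using s3 jF by simp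
        also have "\<dots> = (\<Sum>i\<in>F. \<sigma> i * P i j) + (\<Sum>i\<in>F. \<sigma> i * P i n) * P n j / d"
        proof -
          have "(\<Sum>i\<in>F. \<sigma> i * P' i j) = (\<Sum>i\<in>F. \<sigma> i * P i j + (\<sigma> i * P i n) * (P n j / d))"
            unfolding P'_def by (intro sum.cong) (auto simp: algebra_simps)
          also have "\<dots> = (\<Sum>i\<in>F. \<sigma> i * P i j) + (\<Sum>i\<in>F. \<sigma> i * P i n) * (P n j / d)"
            by (simp add: sum.distrib sum_distrib_right sum_divide_distrib)
          finally show ?thesis by simp
        qed
        also have "\<dots> = (\<Sum>i\<in>F. \<sigma> i * P i j) + c * P n j" unfolding c_def by simp
        finally show ?thesis using e False unfolding \<rho>_def by simp
      qed
    qed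
    show ?thesis
    proof (intro exI[of _ "\<lambda>i. \<rho> i / (1 + c)"] conjI ballI)
      show "(\<Sum>i\<in>insert n F. \<rho> i / (1 + c)) = 1" using rsum c0 by (simp add: sum_divide_distrib[symmetric])
      fix j assume "j \<in> insert n F"
      then show "(\<Sum>i\<in>insert n F. \<rho> i / (1 + c) * P i j) = \<rho> j / (1 + c)"
        using rstat[of j] by (simp add: sum_divide_distrib[symmetric] algebra_simps)
    next
      fix i assume "i \<in> insert n F"
      then show "0 \<le> \<rho> i / (1 + c)" using c0 s1 unfolding \<rho>_def by auto
    qed
  qed
qed

theorem theorem6:
  fixes K :: "'a::{real_vector,topological_space} set"
    and T :: "'a \<Rightarrow> 'a set"
  assumes "tvs_type TYPE('a)"
    and "is_simplex K"
    and "\<forall>x\<in>K. T x \<subseteq> K"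
    and "star_weakly_convex_graph K K T"
  shows "\<exists>x\<in>K. x \<in> cl_corr K K T x"
proof (rule ccontr)
  assume H: "\<not> (\<exists>x\<in>K. x \<in> cl_corr K K T x)"
  obtain S where S: "finite S" "S \<noteq> {}" "K = convex hull S"
    using assms(2) unfolding is_simplex_def by blast
  define \<phi> where "\<phi> \<pi> = (\<Sum>s\<in>S. \<pi> s *\<^sub>R s)" for \<pi> :: "'a \<Rightarrow> real"
  define \<Delta> where "\<Delta> = {\<pi>::'a\<Rightarrow>real. (\<forall>s. s \<notin> S \<longrightarrow> \<pi> s = 0) \<and> (\<forall>s\<in>S. 0 \<le> \<pi> s) \<and> sum \<pi> S = 1}"
  have \<phi>K: "\<phi> \<pi> \<in> K" if "\<pi> \<in> \<Delta>" for \<pi>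
    unfolding \<phi>_def S(3) using that S(1)
    by (intro convex_sum) (auto simp: \<Delta>_def hull_inc)
  have cont\<phi>: "continuous_on UNIV \<phi>"
    unfolding \<phi>_def
    by (intro tvs_sum[OF assms(1) S(1)] tvs_scale[OF assms(1)] continuous_on_const
        continuous_on_product_coordinates)
  have comp\<Delta>: "compact \<Delta>"
  proof -
    define B where "B s = (if s \<in> S then {0..1} else {0::real})" for s :: 'a
    have "compactin (product_topology (\<lambda>i. euclidean) UNIV) (PiE UNIV B)"
      unfolding compactin_PiE by (auto simp: B_def compactin_euclidean_iff)
    then have c1: "compact (PiE UNIV B)"
      by (simp add: euclidean_product_topology compactin_euclidean_iff)
    have c2: "closed {\<pi>::'a\<Rightarrow>real. sum \<pi> S = 1}"
      by (intro closed_Collect_eq continuous_on_sum continuous_on_product_coordinates continuous_on_const)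
    have "\<Delta> = PiE UNIV B \<inter> {\<pi>. sum \<pi> S = 1}"
    proof (intro set_eqI iffI)
      fix \<pi> assume "\<pi> \<in> \<Delta>"
      then have h: "\<forall>s. s \<notin> S \<longrightarrow> \<pi> s = 0" "\<forall>s\<in>S. 0 \<le> \<pi> s" "sum \<pi> S = 1"
        unfolding \<Delta>_def by auto
      have "\<pi> s \<le> 1" if "s \<in> S" for s
        using member_le_sum[of s S \<pi>] h S(1) that by auto
      then show "\<pi> \<in> PiE UNIV B \<inter> {\<pi>. sum \<pi> S = 1}" using h by (auto simp: B_def PiE_iff)
    next
      fix \<pi> assume "\<pi> \<in> PiE UNIV B \<inter> {\<pi>. sum \<pi> S = 1}"
      then show "\<pi> \<in> \<Delta>" unfolding \<Delta>_def by (auto simp: B_def PiE_iff split: if_splits)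
    qed
    then show ?thesis using c1 c2 by (simp add: compact_Int_closed)
  qed
  define Gr0 where "Gr0 = Gr K T"
  define N where "N = - closure Gr0"
  have openN: "open N" unfolding N_def by auto
  define G where "G q = (\<phi> (fst q), \<phi> (fst q) + (-1) *\<^sub>R snd q)" for q :: "('a \<Rightarrow> real) \<times> 'a"
  have contG: "continuous_on UNIV G"
    unfolding G_def
    by (intro continuous_on_Pair continuous_on_compose2[OF cont\<phi>] tvs_add[OF assms(1)]
        tvs_scale[OF assms(1)] continuous_on_fst continuous_on_snd continuous_on_id continuous_on_const) auto
  have openGN: "open (G -` N)" using open_vimage[OF openN contG] .
  define \<C> where "\<C> = {A. open A \<and> (\<exists>B. open B \<and> 0 \<in> B \<and> A \<times> B \<subseteq> G -` N)}"
  have cover: "\<Delta> \<subseteq> \<Union>\<C>"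
  proof
    fix \<pi> assume p: "\<pi> \<in> \<Delta>"
    have "(\<phi> \<pi>, \<phi> \<pi>) \<notin> closure Gr0"
      using H \<phi>K[OF p] unfolding cl_corr_def Gr0_def by auto
    then have "(\<pi>, 0) \<in> G -` N" unfolding G_def N_def by simp
    then obtain A B where "open A" "open B" "(\<pi>, 0) \<in> A \<times> B" "A \<times> B \<subseteq> G -` N"
      using open_prod_elim[OF openGN] by metis
    then show "\<pi> \<in> \<Union>\<C>" unfolding \<C>_def by blast
  qed
  obtain \<C>' where C': "\<C>' \<subseteq> \<C>" "finite \<C>'" "\<Delta> \<subseteq> \<Union>\<C>'"
    using compactE[OF comp\<Delta> cover] unfolding \<C>_def by blast
  have "\<forall>A\<in>\<C>'. \<exists>B. open B \<and> 0 \<in> B \<and> A \<times> B \<subseteq> G -` N" using C'(1) unfolding \<C>_def by blast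
  then obtain w where w: "\<forall>A\<in>\<C>'. open (w A) \<and> 0 \<in> w A \<and> A \<times> w A \<subseteq> G -` N"
    by metis
  define V where "V = (\<Inter>A\<in>\<C>'. w A)"
  have openV: "open V" unfolding V_def using w C'(2) by (intro open_INT) auto
  have V0: "0 \<in> V" unfolding V_def using w by auto
  have wcg: "weakly_convex_graph K K (corr_V K T V)"
    using assms(4) openV V0 unfolding star_weakly_convex_graph_def by blast
  have SK: "S \<subseteq> K" unfolding S(3) by (rule hull_subset)
  obtain y where y1: "\<forall>s\<in>S. y s \<in> corr_V K T V s"
    and y2: "convex hull ((\<lambda>x. (x, y x)) ` S) \<subseteq> Gr K (corr_V K T V)"
    using wcg S(1) SK unfolding weakly_convex_graph_def by blast
  have "\<forall>s\<in>S. \<exists>u. (\<forall>t\<in>S. 0 \<le> u t) \<and> sum u S = 1 \<and> (\<Sum>t\<in>S. u t *\<^sub>R t) = y s"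
  proof
    fix s assume "s \<in> S"
    then have "y s \<in> convex hull S" using y1 S(3) unfolding corr_V_def by auto
    then show "\<exists>u. (\<forall>t\<in>S. 0 \<le> u t) \<and> sum u S = 1 \<and> (\<Sum>t\<in>S. u t *\<^sub>R t) = y s"
      using convex_hull_finite[OF S(1)] by auto
  qed
  then obtain \<mu> where \<mu>: "\<forall>s\<in>S. (\<forall>t\<in>S. 0 \<le> \<mu> s t) \<and> sum (\<mu> s) S = 1 \<and> (\<Sum>t\<in>S. \<mu> s t *\<^sub>R t) = y s"
    by metis
  obtain \<pi> where p1: "\<forall>i\<in>S. 0 \<le> \<pi> i" and p2: "(\<Sum>i\<in>S. \<pi> i) = 1"
    and p3: "\<forall>j\<in>S. (\<Sum>i\<in>S. \<pi> i * \<mu> i j) = \<pi> j"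
    using stationary[OF S(1,2), of \<mu>] \<mu> by auto
  define \<pi>' where "\<pi>' s = (if s \<in> S then \<pi> s else 0)" for s
  have p'D: "\<pi>' \<in> \<Delta>" unfolding \<Delta>_def \<pi>'_def using p1 p2 by auto
  have \<phi>eq: "\<phi> \<pi>' = (\<Sum>s\<in>S. \<pi> s *\<^sub>R s)" unfolding \<phi>_def \<pi>'_def by (intro sum.cong) auto
  have mem: "(\<Sum>s\<in>S. \<pi> s *\<^sub>R (s, y s)) \<in> convex hull ((\<lambda>x. (x, y x)) ` S)"
    using S(1) p1 p2 by (intro convex_sum) (auto simp: hull_inc)
  have "(\<Sum>s\<in>S. \<pi> s *\<^sub>R y s) = (\<Sum>s\<in>S. \<Sum>t\<in>S. (\<pi> s * \<mu> s t) *\<^sub>R t)"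
  proof (intro sum.cong refl)
    fix x assume "x \<in> S"
    then have "y x = (\<Sum>t\<in>S. \<mu> x t *\<^sub>R t)" using \<mu> by auto
    then show "\<pi> x *\<^sub>R y x = (\<Sum>t\<in>S. (\<pi> x * \<mu> x t) *\<^sub>R t)" by (simp add: scaleR_sum_right)
  qed
  also have "\<dots> = (\<Sum>t\<in>S. \<Sum>s\<in>S. (\<pi> s * \<mu> s t) *\<^sub>R t)" by (rule sum.swap)
  also have "\<dots> = (\<Sum>t\<in>S. \<pi> t *\<^sub>R t)"
    using p3 by (intro sum.cong) (auto simp: scaleR_sum_left[symmetric])
  finally have sndeq: "(\<Sum>s\<in>S. \<pi> s *\<^sub>R y s) = \<phi> \<pi>'" using \<phi>eq by simp
  have "(\<Sum>s\<in>S. \<pi> s *\<^sub>R (s, y s)) = (\<phi> \<pi>', \<phi> \<pi>')"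
  proof (rule prod_eqI)
    show "fst (\<Sum>s\<in>S. \<pi> s *\<^sub>R (s, y s)) = fst (\<phi> \<pi>', \<phi> \<pi>')" by (simp add: fst_sum \<phi>eq)
    have "snd (\<Sum>s\<in>S. \<pi> s *\<^sub>R (s, y s)) = (\<Sum>s\<in>S. \<pi> s *\<^sub>R y s)" by (simp add: snd_sum)
    then show "snd (\<Sum>s\<in>S. \<pi> s *\<^sub>R (s, y s)) = snd (\<phi> \<pi>', \<phi> \<pi>')" using sndeq by simp
  qed
  with mem y2 have "(\<phi> \<pi>', \<phi> \<pi>') \<in> Gr K (corr_V K T V)" by auto
  then have "\<phi> \<pi>' \<in> corr_V K T V (\<phi> \<pi>')" unfolding Gr_def by auto
  then obtain z v where zv: "\<phi> \<pi>' = z + v" "z \<in> T (\<phi> \<pi>')" "v \<in> V"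
    unfolding corr_V_def by auto
  obtain A where A: "A \<in> \<C>'" "\<pi>' \<in> A" using C'(3) p'D by auto
  have "v \<in> w A" using zv(3) A(1) unfolding V_def by auto
  then have "G (\<pi>', v) \<in> N" using w A by auto
  moreover have "G (\<pi>', v) = (\<phi> \<pi>', z)" unfolding G_def using zv(1) by (simp add: algebra_simps)
  moreover have "(\<phi> \<pi>', z) \<in> Gr0" unfolding Gr0_def Gr_def using zv(2) \<phi>K[OF p'D] by auto
  ultimately show False unfolding N_def using closure_subset by auto
qed

end
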